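(* For every integer $t\ge 0$: $$A_3(9t+4,6,[3,1])\le 9t^2+6t+1+\left\lfloor\tfrac{t}{4}\right\rfloor,\quad A_3(9t+5,6,[3,1])\le 9t^2+7t+1+\left\lfloor\tfrac{t+1}{4}\right\rfloor,\quad A_3(9t+7,6,[3,1])\le 9t^2+11t+3+\left\lfloor\tfrac{t+1}{2}\right\rfloor.$$
   Context: For a finite set $X$ with $|X|=n$, a ternary code of length $n$ is a subset $\mathcal C\subseteq\mathbb Z_3^X$; its elements are codewords. The Hamming distance between $u,v\in\mathbb Z_3^X$ is the number of $x\in X$ with $u_x\ne v_x$. A vector $u$ has composition $[w_1,w_2]$ if exactly $w_1$ of its coordinates equal $1$ and exactly $w_2$ equal $2$ (all others $0$). An $(n,d,[w_1,w_2])_3$-code is a ternary code of length $n$ in which every codeword has composition $[w_1,w_2]$ and any two distinct codewords are at Hamming distance at least $d$. $A_3(n,d,[w_1,w_2])$ denotes the maximum number of codewords of an $(n,d,[w_1,w_2])_3$-code. *)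

theory Defs
  imports Main
begin

definition ternary_words :: "nat \<Rightarrow> nat list set" where
  "ternary_words n = {u. length u = n \<and> set u \<subseteq> {0,1,2}}"

definition hamming :: "nat list \<Rightarrow> nat list \<Rightarrow> nat" where
  "hamming u v = card {i. i < length u \<and> u ! i \<noteq> v ! i}"

definition has_composition :: "nat list \<Rightarrow> nat \<Rightarrow> nat \<Rightarrow> bool" where
  "has_composition u w1 w2 \<longleftrightarrow>
     card {i. i < length u \<and> u ! i = 1} = w1 \<and> card {i. i < length u \<and> u ! i = 2} = w2"

definition const_comp_code :: "nat \<Rightarrow> nat \<Rightarrow> nat \<Rightarrow> nat \<Rightarrow> nat list set \<Rightarrow> bool" where
  "const_comp_code n d w1 w2 C \<longleftrightarrow>
     C \<subseteq> ternary_words n \<and> (\<forall>u\<in>C. has_composition u w1 w2) \<and>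
     (\<forall>u\<in>C. \<forall>v\<in>C. u \<noteq> v \<longrightarrow> hamming u v \<ge> d)"

definition A3 :: "nat \<Rightarrow> nat \<Rightarrow> nat \<Rightarrow> nat \<Rightarrow> nat" where
  "A3 n d w1 w2 = Max (card ` {C. const_comp_code n d w1 w2 C})"

end

theory Submission
  imports Defs
begin

lemma supp4:
  assumes "set u \<subseteq> {0,1,2}" "length u = n" "has_composition u 3 1"
  shows "card {i. i<n \<and> u!i \<noteq> 0} = 4"
proof -
  have e: "{i. i<n \<and> u!i \<noteq> 0} = {i. i<n \<and> u!i = 1} \<union> {i. i<n \<and> u!i = 2}"
  proof (intro set_eqI iffI)
    fix i assume "i \<in> {i. i<n \<and> u!i \<noteq> 0}"
    then have "i < n" "u!i \<noteq> 0" by auto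
    moreover have "u!i \<in> {0,1,2}" using assms(1,2) \<open>i<n\<close> nth_mem by blast
    ultimately show "i \<in> {i. i<n \<and> u!i = 1} \<union> {i. i<n \<and> u!i = 2}" by auto
  qed auto
  have "card ({i. i<n \<and> u!i = 1} \<union> {i. i<n \<and> u!i = 2}) = 3 + 1"
    using assms(2,3) unfolding has_composition_def
    by (subst card_Un_disjoint) auto
  then show ?thesis using e by simp
qed

lemma close:
  assumes "length u = n" "card {k. k<n \<and> u!k \<noteq> 0} = 4" "card {k. k<n \<and> v!k \<noteq> 0} = 4"
    "i<n" "j<n" "i\<noteq>j" "u!i\<noteq>0" "u!j\<noteq>0" "v!i\<noteq>0" "v!j\<noteq>0" "u!i = v!i"
  shows "hamming u v \<le> 5"
proof -
  define Su where "Su = {k. k<n \<and> u!k \<noteq> 0}"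
  define Sv where "Sv = {k. k<n \<and> v!k \<noteq> 0}"
  have fin: "finite Su" "finite Sv" unfolding Su_def Sv_def by auto
  have D: "{k. k < length u \<and> u!k \<noteq> v!k} \<subseteq> (Su \<union> Sv) - {i}"
    using assms(1,11) unfolding Su_def Sv_def by auto
  have cu: "card (Su \<union> Sv) + card (Su \<inter> Sv) = card Su + card Sv"
    using fin by (rule card_Un_Int[symmetric])
  have "{i,j} \<subseteq> Su \<inter> Sv" using assms unfolding Su_def Sv_def by auto
  then have "card {i,j} \<le> card (Su \<inter> Sv)" using fin by (intro card_mono) auto
  then have "card (Su \<inter> Sv) \<ge> 2" using assms(6) by simp
  then have "card (Su \<union> Sv) \<le> 6" using cu assms(2,3) unfolding Su_def Sv_def by simp
  moreover have "i \<in> Su \<union> Sv" using assms unfolding Su_def by auto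
  ultimately have "card ((Su \<union> Sv) - {i}) \<le> 5" using fin by (simp add: card_Diff_singleton)
  moreover have "card {k. k < length u \<and> u!k \<noteq> v!k} \<le> card ((Su \<union> Sv) - {i})"
    using D fin by (intro card_mono) auto
  ultimately show ?thesis unfolding hamming_def by simp
qed

lemma dc:
  assumes "finite C"
  shows "(\<Sum>x<(n::nat). card {u\<in>C. P u x}) = (\<Sum>u\<in>C. card {x. x<n \<and> P u x})"
proof -
  have "(\<Sum>x<n. card {u\<in>C. P u x}) = (\<Sum>x<n. \<Sum>u\<in>C. if P u x then 1 else 0)"
    using assms by (simp add: sum.inter_filter[symmetric])
  also have "\<dots> = (\<Sum>u\<in>C. \<Sum>x<n. if P u x then 1 else 0)" by (rule sum.swap)
  also have "\<dots> = (\<Sum>u\<in>C. card {x. x<n \<and> P u x})"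
  proof (intro sum.cong refl)
    fix u
    have "{x. x<n \<and> P u x} = {x\<in>{..<n}. P u x}" by auto
    then show "(\<Sum>x<n. if P u x then 1 else 0) = card {x. x<n \<and> P u x}"
      using sum.inter_filter[of "{..<n}" "\<lambda>_. 1::nat" "P u"] by simp
  qed
  finally show ?thesis .
qed


lemma finite_tw: "finite (ternary_words n)"
proof -
  have "ternary_words n = {xs. set xs \<subseteq> {0,1,2} \<and> length xs = n}"
    unfolding ternary_words_def by auto
  then show ?thesis by (simp add: finite_lists_length_eq)
qed

lemma local_bound:
  assumes code: "const_comp_code n 6 3 1 C" and x: "x<n"
  shows "3 * card {u\<in>C. u!x=1} \<le> n-1 \<and> 2*card {u\<in>C. u!x=1} + 3*card {u\<in>C. u!x=2} \<le> n-1"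
proof -
  have len: "\<And>u. u\<in>C \<Longrightarrow> length u = n" and st: "\<And>u. u\<in>C \<Longrightarrow> set u \<subseteq> {0,1,2}"
    and comp: "\<And>u. u\<in>C \<Longrightarrow> has_composition u 3 1"
    and dist: "\<And>u v. u\<in>C \<Longrightarrow> v\<in>C \<Longrightarrow> u\<noteq>v \<Longrightarrow> hamming u v \<ge> 6"
    using code unfolding const_comp_code_def ternary_words_def by auto
  have finC: "finite C" using code finite_tw unfolding const_comp_code_def
    by (meson finite_subset)
  have s4: "\<And>u. u\<in>C \<Longrightarrow> card {i. i<n \<and> u!i \<noteq> 0} = 4"
    using supp4 len st comp by blast
  have c1: "\<And>u. u\<in>C \<Longrightarrow> card {i. i<n \<and> u!i = 1} = 3"
    using len comp unfolding has_composition_def by auto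
  have c2: "\<And>u. u\<in>C \<Longrightarrow> card {i. i<n \<and> u!i = 2} = 1"
    using len comp unfolding has_composition_def by auto
  have val: "\<And>u i. u\<in>C \<Longrightarrow> i<n \<Longrightarrow> u!i \<in> {0,1,2}"
    using len st nth_mem by blast
  have two_uniq: "\<And>u i j. u\<in>C \<Longrightarrow> i<n \<Longrightarrow> j<n \<Longrightarrow> u!i = 2 \<Longrightarrow> u!j = 2 \<Longrightarrow> i = j"
  proof -
    fix u i j assume "u\<in>C" "i<n" "j<n" "u!i = 2" "u!j = 2"
    from c2[OF \<open>u\<in>C\<close>] obtain a where "{i. i<n \<and> u!i = 2} = {a}" by (rule card_1_singletonE)
    moreover have "i \<in> {i. i<n \<and> u!i = 2}" "j \<in> {i. i<n \<and> u!i = 2}"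
      using \<open>i<n\<close> \<open>j<n\<close> \<open>u!i = 2\<close> \<open>u!j = 2\<close> by simp_all
    ultimately show "i = j" by simp
  qed
  have K: "\<And>u v i j. u\<in>C \<Longrightarrow> v\<in>C \<Longrightarrow> i<n \<Longrightarrow> j<n \<Longrightarrow> i\<noteq>j \<Longrightarrow> u!i\<noteq>0 \<Longrightarrow> u!j\<noteq>0
     \<Longrightarrow> v!i\<noteq>0 \<Longrightarrow> v!j\<noteq>0 \<Longrightarrow> u!i = v!i \<Longrightarrow> u = v"
  proof (rule ccontr)
    fix u v i j assume a: "u\<in>C" "v\<in>C" "i<n" "j<n" "i\<noteq>j" "u!i\<noteq>0" "u!j\<noteq>0"
      "v!i\<noteq>0" "v!j\<noteq>0" "u!i = v!i" "u \<noteq> v"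
    have "hamming u v \<le> 5" by (rule close[OF len[OF a(1)] s4[OF a(1)] s4[OF a(2)] a(3-10)])
    with dist[OF a(1,2,11)] show False by simp
  qed
  define R where "R = {u\<in>C. u!x=1}"
  define Q where "Q = {u\<in>C. u!x=2}"
  define F1 where "F1 u = {y. y<n \<and> y\<noteq>x \<and> u!y\<noteq>0}" for u :: "nat list"
  define F2 where "F2 u = {y. y<n \<and> y\<noteq>x \<and> u!y\<noteq>0 \<and> (u!x=1 \<longrightarrow> u!y=1)}" for u :: "nat list"
  have finR: "finite R" "finite Q" using finC unfolding R_def Q_def by auto
  have cF1: "\<And>u. u\<in>C \<Longrightarrow> u!x \<noteq> 0 \<Longrightarrow> card (F1 u) = 3"
  proof -
    fix u assume "u\<in>C" "u!x\<noteq>0"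
    have "F1 u = {i. i<n \<and> u!i \<noteq> 0} - {x}" unfolding F1_def by auto
    then show "card (F1 u) = 3" using s4[OF \<open>u\<in>C\<close>] x \<open>u!x\<noteq>0\<close>
      by (simp add: card_Diff_singleton)
  qed
  have cF2R: "\<And>u. u\<in>R \<Longrightarrow> card (F2 u) = 2"
  proof -
    fix u assume "u\<in>R"
    then have "u\<in>C" "u!x = 1" unfolding R_def by auto
    have "F2 u = {i. i<n \<and> u!i = 1} - {x}" unfolding F2_def using \<open>u!x=1\<close> by auto
    then show "card (F2 u) = 2" using c1[OF \<open>u\<in>C\<close>] x \<open>u!x=1\<close>
      by (simp add: card_Diff_singleton)
  qed
  have cF2Q: "\<And>u. u\<in>Q \<Longrightarrow> card (F2 u) = 3"
  proof -
    fix u assume "u\<in>Q"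
    then have "u\<in>C" "u!x = 2" unfolding Q_def by auto
    have "F2 u = F1 u" unfolding F2_def F1_def using \<open>u!x=2\<close> by auto
    then show "card (F2 u) = 3" using cF1 \<open>u\<in>C\<close> \<open>u!x=2\<close> by simp
  qed
  have sub: "{0..<n} - {x} \<supseteq> snd ` (Sigma R F1)" "{0..<n} - {x} \<supseteq> snd ` (Sigma (R\<union>Q) F2)"
    unfolding F1_def F2_def by auto
  have cn: "card ({0..<n} - {x}) = n - 1" using x by simp
  have inj1: "inj_on snd (Sigma R F1)"
  proof (rule inj_onI)
    fix a b assume "a \<in> Sigma R F1" "b \<in> Sigma R F1" "snd a = snd b"
    then show "a = b" unfolding R_def F1_def
      using K[of "fst a" "fst b" x "snd a"] x by (cases a, cases b) auto
  qed
  have "card (Sigma R F1) = (\<Sum>u\<in>R. card (F1 u))"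
    using finR by (intro card_SigmaI) (auto simp: F1_def)
  also have "\<dots> = (\<Sum>u\<in>R. 3)" using cF1 unfolding R_def by (intro sum.cong) auto
  finally have e1: "card (Sigma R F1) = 3 * card R" by simp
  have "card (Sigma R F1) = card (snd ` Sigma R F1)" using inj1 by (simp add: card_image)
  also have "\<dots> \<le> n - 1" using sub(1) cn by (metis card_mono finite_Diff finite_atLeastLessThan)
  finally have b1: "3 * card R \<le> n - 1" using e1 by simp
  have inj2: "inj_on snd (Sigma (R\<union>Q) F2)"
  proof (rule inj_onI)
    fix a b assume A: "a \<in> Sigma (R\<union>Q) F2" "b \<in> Sigma (R\<union>Q) F2" "snd a = snd b"
    obtain u y where a: "a = (u,y)" by (cases a)
    obtain v where b: "b = (v,y)" using A(3) a by (cases b) auto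
    have u: "u\<in>C" "u!x \<in> {1,2}" "y<n" "y\<noteq>x" "u!y\<noteq>0" "u!x=1 \<longrightarrow> u!y=1"
      using A(1) a unfolding R_def Q_def F2_def by auto
    have v: "v\<in>C" "v!x \<in> {1,2}" "v!y\<noteq>0" "v!x=1 \<longrightarrow> v!y=1"
      using A(2) b unfolding R_def Q_def F2_def by auto
    have "u = v"
    proof (cases "u!x = v!x")
      case True
      then show ?thesis using K[OF u(1) v(1) x u(3)] u v by auto
    next
      case False
      have vy: "v!y \<in> {0,1,2}" "u!y \<in> {0,1,2}" using val[OF v(1) u(3)] val[OF u(1) u(3)] by blast+
      have "u!y = 1" "v!y = 1"
      proof -
        have "u!y \<noteq> 2" using two_uniq[OF u(1) x u(3)] u v False by auto
        moreover have "v!y \<noteq> 2" using two_uniq[OF v(1) x u(3)] u v False by auto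
        ultimately show "u!y = 1" "v!y = 1" using vy(1) vy(2) u(5) v(3) by fastforce+
      qed
      then show ?thesis using K[OF u(1) v(1) u(3) x u(4)] u v by auto
    qed
    then show "a = b" using a b by simp
  qed
  have RQ: "R \<inter> Q = {}" unfolding R_def Q_def by auto
  have "card (Sigma (R\<union>Q) F2) = (\<Sum>u\<in>R\<union>Q. card (F2 u))"
    using finR by (intro card_SigmaI) (auto simp: F2_def)
  also have "\<dots> = (\<Sum>u\<in>R. card (F2 u)) + (\<Sum>u\<in>Q. card (F2 u))"
    using finR RQ by (simp add: sum.union_disjoint)
  also have "\<dots> = (\<Sum>u\<in>R. 2) + (\<Sum>u\<in>Q. 3)"
    using cF2R cF2Q by simp
  finally have e2: "card (Sigma (R\<union>Q) F2) = 2 * card R + 3 * card Q" by simp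
  have "card (Sigma (R\<union>Q) F2) = card (snd ` Sigma (R\<union>Q) F2)" using inj2 by (simp add: card_image)
  also have "\<dots> \<le> n - 1" using sub(2) cn by (metis card_mono finite_Diff finite_atLeastLessThan)
  finally have b2: "2 * card R + 3 * card Q \<le> n - 1" using e2 by simp
  show ?thesis using b1 b2 unfolding R_def Q_def by simp
qed


lemma code_bound:
  assumes code: "const_comp_code n 6 3 1 C"
    and m: "\<And>r q. 3*r \<le> n-1 \<Longrightarrow> 2*r+3*q \<le> n-1 \<Longrightarrow> r+q \<le> m"
  shows "4 * card C \<le> n*m"
proof -
  have finC: "finite C" using code finite_tw unfolding const_comp_code_def
    by (meson finite_subset)
  have len: "\<And>u. u\<in>C \<Longrightarrow> length u = n" and comp: "\<And>u. u\<in>C \<Longrightarrow> has_composition u 3 1"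
    using code unfolding const_comp_code_def ternary_words_def by auto
  have "(\<Sum>x<n. card {u\<in>C. u!x=1} + card {u\<in>C. u!x=2})
      = (\<Sum>x<n. card {u\<in>C. u!x=1}) + (\<Sum>x<n. card {u\<in>C. u!x=2})"
    by (simp add: sum.distrib)
  also have "\<dots> = (\<Sum>u\<in>C. card {x. x<n \<and> u!x=1}) + (\<Sum>u\<in>C. card {x. x<n \<and> u!x=2})"
    using dc[OF finC, where n=n and P="\<lambda>u x. u!x=1"] dc[OF finC, where n=n and P="\<lambda>u x. u!x=2"] by simp
  also have "\<dots> = (\<Sum>u\<in>C. 3) + (\<Sum>u\<in>C. 1)"
  proof -
    have "(\<Sum>u\<in>C. card {x. x<n \<and> u!x=1}) = (\<Sum>u\<in>C. 3)"
      by (intro sum.cong refl) (use len comp in \<open>auto simp: has_composition_def\<close>)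
    moreover have "(\<Sum>u\<in>C. card {x. x<n \<and> u!x=2}) = (\<Sum>u\<in>C. 1)"
      by (intro sum.cong refl) (use len comp in \<open>auto simp: has_composition_def\<close>)
    ultimately show ?thesis by simp
  qed
  finally have e: "(\<Sum>x<n. card {u\<in>C. u!x=1} + card {u\<in>C. u!x=2}) = 4 * card C" by simp
  have "(\<Sum>x<n. card {u\<in>C. u!x=1} + card {u\<in>C. u!x=2}) \<le> (\<Sum>x<n. m)"
  proof (rule sum_mono)
    fix x assume "x \<in> {..<n}"
    then have "x < n" by simp
    then show "card {u\<in>C. u!x=1} + card {u\<in>C. u!x=2} \<le> m"
      using local_bound[OF code] m by blast
  qed
  then show ?thesis using e by simp
qed

lemma A3_le:
  assumes "\<And>C. const_comp_code n d w1 w2 C \<Longrightarrow> card C \<le> B"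
  shows "A3 n d w1 w2 \<le> B"
proof -
  have "{C. const_comp_code n d w1 w2 C} \<subseteq> Pow (ternary_words n)"
    unfolding const_comp_code_def by auto
  then have fin: "finite {C. const_comp_code n d w1 w2 C}"
    using finite_tw by (meson finite_Pow_iff finite_subset)
  have ne: "{} \<in> {C. const_comp_code n d w1 w2 C}" unfolding const_comp_code_def by simp
  show ?thesis unfolding A3_def
    using fin ne assms by (intro Max.boundedI) auto
qed

lemma fl: "4*(c::nat) \<le> 4*X + s \<Longrightarrow> s < 4 \<Longrightarrow> c \<le> X" by linarith
lemma fl3: "3*(c::nat) \<le> 3*X + s \<Longrightarrow> s < 3 \<Longrightarrow> c \<le> X" by linarith
lemma ar1: "4*(c::nat) \<le> 36*P + 25*t + 4 \<Longrightarrow> c \<le> 9*P + 6*t + 1 + t div 4"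
proof -
  assume a: "4*(c::nat) \<le> 36*P + 25*t + 4"
  have "t = 4*(t div 4) + t mod 4" "t mod 4 < 4" by simp_all
  then show ?thesis using fl[of c "9*P + 6*t + 1 + t div 4" "t mod 4"] a by linarith
qed
lemma ar2: "4*(c::nat) \<le> 36*P + 29*t + 5 \<Longrightarrow> c \<le> 9*P + 7*t + 1 + (t+1) div 4"
proof -
  assume a: "4*(c::nat) \<le> 36*P + 29*t + 5"
  have "t+1 = 4*((t+1) div 4) + (t+1) mod 4" "(t+1) mod 4 < 4" by simp_all
  then show ?thesis using fl[of c "9*P + 7*t + 1 + (t+1) div 4" "(t+1) mod 4"] a by linarith
qed
lemma ar3: "4*(c::nat) \<le> 36*P + 46*t + 14 \<Longrightarrow> c \<le> 9*P + 11*t + 3 + (t+1) div 2"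
proof -
  assume a: "4*(c::nat) \<le> 36*P + 46*t + 14"
  have "t+1 = 2*((t+1) div 2) + (t+1) mod 2" "(t+1) mod 2 < 2" by simp_all
  then show ?thesis using fl[of c "9*P + 11*t + 3 + (t+1) div 2" "2*((t+1) mod 2)"] a by linarith
qed
lemma m1: "3*r \<le> (9*t+4::nat)-1 \<Longrightarrow> 2*r+3*q \<le> (9*t+4)-1 \<Longrightarrow> r+q \<le> 4*t+1"
  using fl3[of "r+q" "4*t+1" 0] by linarith
lemma m2: "3*r \<le> (9*t+5::nat)-1 \<Longrightarrow> 2*r+3*q \<le> (9*t+5)-1 \<Longrightarrow> r+q \<le> 4*t+1"
  using fl3[of "r+q" "4*t+1" 2] fl3[of r "3*t+1" 1] by linarith
lemma m3: "3*r \<le> (9*t+7::nat)-1 \<Longrightarrow> 2*r+3*q \<le> (9*t+7)-1 \<Longrightarrow> r+q \<le> 4*t+2"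
  using fl3[of "r+q" "4*t+2" 2] fl3[of r "3*t+2" 0] by linarith

theorem mainTheorem3:
  fixes t :: nat
  shows "A3 (9*t+4) 6 3 1 \<le> 9*t^2 + 6*t + 1 + t div 4
       \<and> A3 (9*t+5) 6 3 1 \<le> 9*t^2 + 7*t + 1 + (t+1) div 4
       \<and> A3 (9*t+7) 6 3 1 \<le> 9*t^2 + 11*t + 3 + (t+1) div 2"
proof (intro conjI)
  have sq: "(9*t+4)*(4*t+1) = 36*t^2 + 25*t + 4" "(9*t+5)*(4*t+1) = 36*t^2 + 29*t + 5"
    "(9*t+7)*(4*t+2) = 36*t^2 + 46*t + 14"
    by (simp_all add: algebra_simps power2_eq_square)
  show "A3 (9*t+4) 6 3 1 \<le> 9*t^2 + 6*t + 1 + t div 4"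
  proof (rule A3_le)
    fix C assume c: "const_comp_code (9*t+4) 6 3 1 C"
    have "4 * card C \<le> (9*t+4)*(4*t+1)" by (rule code_bound[OF c]) (rule m1)
    then show "card C \<le> 9*t^2 + 6*t + 1 + t div 4" using ar1 sq(1) by simp
  qed
  show "A3 (9*t+5) 6 3 1 \<le> 9*t^2 + 7*t + 1 + (t+1) div 4"
  proof (rule A3_le)
    fix C assume c: "const_comp_code (9*t+5) 6 3 1 C"
    have "4 * card C \<le> (9*t+5)*(4*t+1)" by (rule code_bound[OF c]) (rule m2)
    then show "card C \<le> 9*t^2 + 7*t + 1 + (t+1) div 4" using ar2 sq(2) by simp
  qed
  show "A3 (9*t+7) 6 3 1 \<le> 9*t^2 + 11*t + 3 + (t+1) div 2"
  proof (rule A3_le)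
    fix C assume c: "const_comp_code (9*t+7) 6 3 1 C"
    have "4 * card C \<le> (9*t+7)*(4*t+2)" by (rule code_bound[OF c]) (rule m3)
    then show "card C \<le> 9*t^2 + 11*t + 3 + (t+1) div 2" using ar3 sq(3) by simp
  qed
qed

end
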